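(* Let $0<q<1/2$, $p=1-q$, and for integers $z\ge1$ let $$P(z)=1-\sum_{k=0}^{z-1}\left(p^zq^k-q^zp^k\right)\binom{k+z-1}{k},\qquad P_{SN}(z)=1-\sum_{k=0}^{z-1}e^{-zq/p}\frac{(zq/p)^k}{k!}\left(1-\left(\frac qp\right)^{z-k}\right).$$ Then as $z\to+\infty$, $P_{SN}(z)\prec P(z)$, i.e. $P_{SN}(z)/P(z)\to0$.
   Context: $P(z)$ is the exact probability of success of a double-spend attack after $z$ confirmations, $P_{SN}(z)$ is Nakamoto's approximation. *)

theory Defs
  imports Complex_Main
begin

text \<open>Exact success probability of a double-spend attack after z confirmations,
  with attacker hash share q and honest share p = 1 - q.\<close>
definition P_exact :: "real \<Rightarrow> nat \<Rightarrow> real" where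
  "P_exact q z = (let p = 1 - q in
     1 - (\<Sum>k<z. (p ^ z * q ^ k - q ^ z * p ^ k) * real ((k + z - 1) choose k)))"

definition P_SN :: "real \<Rightarrow> nat \<Rightarrow> real" where
  "P_SN q z = (let p = 1 - q; lam = real z * q / p in
     1 - (\<Sum>k<z. exp (- lam) * lam ^ k / fact k * (1 - (q / p) ^ (z - k))))"

end

theory Submission
  imports Defs "HOL-Analysis.Generalised_Binomial_Theorem"
begin

lemma binsum_le:
  fixes q :: real and z :: nat
  assumes q0: "0 \<le> q" and q1: "q < 1" and z1: "z \<ge> 1"
  shows "(\<Sum>k<z. (1-q)^z * q^k * real ((k + z - 1) choose k)) \<le> 1"
proof -
  have eq: "((- real z) gchoose n) * (-q)^n = real ((n + z - 1) choose n) * q^n" for n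
  proof -
    have a: "((- real z) gchoose n) = (-1)^n * ((real n + real z - 1) gchoose n)"
      using gbinomial_negated_upper[of "- real z" n] by (simp add: algebra_simps)
    have b: "real n + real z - 1 = real (n + z - 1)" using z1 by simp
    have c: "(real n + real z - 1) gchoose n =  real ((n + z - 1) choose n)"
      using b by (simp only: binomial_gbinomial)
    have d: "(-q)^n = (-1)^n * q^n" by (rule power_minus)
    have e: "(-1::real)^n * (-1)^n = 1" by (simp add: power_mult_distrib[symmetric])
    have "((- real z) gchoose n) * (-q)^n = ((-1)^n * ((real n + real z - 1) gchoose n)) * ((-1)^n * q^n)"
      by (simp only: a d)
    also have "\<dots> = ((-1)^n * (-1)^n) * (((real n + real z - 1) gchoose n) * q^n)"
      by (simp only: mult_ac)
    also have "\<dots> = real ((n + z - 1) choose n) * q^n"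
      by (simp only: e c mult_1_left)
    finally show ?thesis .
  qed
  have "(\<lambda>n. ((- real z) gchoose n) * (-q)^n) sums (1 + (-q)) powr (- real z)"
    by (rule gen_binomial_real) (use q0 q1 in simp)
  hence "(\<lambda>n. real ((n + z - 1) choose n) * q^n) sums (1 + (-q)) powr (- real z)"
    by (simp only: eq)
  hence S: "(\<lambda>n. real ((n + z - 1) choose n) * q^n) sums (1-q) powr (- real z)"
    by (simp only: diff_conv_add_uminus)
  have "(\<Sum>k<z. real ((k + z - 1) choose k) * q^k) \<le> (1-q) powr (- real z)"
    using sum_le_suminf[OF sums_summable[OF S], of "{..<z}"] sums_unique[OF S] q0 by simp
  also have "\<dots> = 1 / (1-q)^z" using q1 by (simp add: powr_minus powr_realpow divide_inverse)
  finally have "(1-q)^z * (\<Sum>k<z. real ((k + z - 1) choose k) * q^k) \<le> 1"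
    using q1 by (simp add: field_simps)
  thus ?thesis by (simp add: sum_distrib_left mult.assoc mult.commute mult.left_commute)
qed

lemma Pexact_lower:
  fixes q :: real and z :: nat
  assumes q0: "0 < q" and q1: "q < 1" and z2: "z \<ge> 2"
  shows "P_exact q z \<ge> q^z * (1-q)^(z-1) * (4^(z-1) / (2 * real (z-1)))"
proof -
  define p where "p = 1 - q"
  have p0: "0 < p" using q1 p_def by simp
  have eq: "P_exact q z = (1 - (\<Sum>k<z. p^z * q^k * real ((k + z - 1) choose k)))
      + (\<Sum>k<z. q^z * p^k * real ((k + z - 1) choose k))"
    unfolding P_exact_def Let_def p_def[symmetric] by (simp add: sum_subtractf left_diff_distrib)
  have A: "0 \<le> 1 - (\<Sum>k<z. p^z * q^k * real ((k + z - 1) choose k))"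
    using binsum_le[of q z] q0 q1 z2 unfolding p_def by simp
  have T: "q^z * p^(z-1) * real (((z-1) + z - 1) choose (z-1)) \<le> (\<Sum>k<z. q^z * p^k * real ((k + z - 1) choose k))"
    by (rule member_le_sum[where f="\<lambda>k. q^z * p^k * real ((k + z - 1) choose k)"]) (use z2 q0 p0 in auto)
  moreover have "(z-1) + z - 1 = 2 * (z-1)" using z2 by simp
  moreover have "4^(z-1) / (2 * real (z-1)) \<le> real ((2 * (z-1)) choose (z-1))"
    by (rule central_binomial_lower_bound) (use z2 in simp)
  ultimately have m: "4^(z-1) / (2 * real (z-1)) \<le> real (((z-1) + z - 1) choose (z-1))" by simp
  have c0: "0 \<le> q^z * p^(z-1)" using q0 p0 by simp
  have B: "q^z * p^(z-1) * (4^(z-1) / (2 * real (z-1))) \<le> (\<Sum>k<z. q^z * p^k * real ((k + z - 1) choose k))"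
    using mult_left_mono[OF m c0] T by linarith
  have "q^z * p^(z-1) * (4^(z-1) / (2 * real (z-1))) \<le> P_exact q z" unfolding eq by (rule add_increasing[OF A B])
  thus ?thesis unfolding p_def .
qed


lemma exp_sums_real: "(\<lambda>n. (x::real)^n / fact n) sums exp x"
  using exp_converges[of x] by (simp add: divide_inverse mult.commute)

lemma expsum_le: "0 \<le> (x::real) \<Longrightarrow> (\<Sum>k<z. x^k / fact k) \<le> exp x"
  using sum_le_suminf[OF sums_summable[OF exp_sums_real[of x]], of "{..<z}"] sums_unique[OF exp_sums_real[of x]]
  by simp

lemma PSN_bounds:
  fixes q :: real and z :: nat
  assumes q0: "0 < q" and q1: "q < 1/2"
  defines "s \<equiv> q / (1 - q)"
  shows "0 \<le> P_SN q z \<and> P_SN q z \<le> 2 * (s * exp (1 - s))^z"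
proof -
  define p where "p = 1 - q"
  have p0: "0 < p" using q1 p_def by simp
  have s0: "0 < s" and s1: "s < 1" using q0 q1 by (auto simp: s_def field_simps)
  define L where "L = real z * s"
  have L0: "0 \<le> L" using s0 L_def by simp
  have lam: "real z * q / p = L" unfolding L_def s_def p_def by simp
  have qp: "q / p = s" unfolding s_def p_def by simp
  have trm: "exp (- L) * L ^ k / fact k * (1 - s ^ (z - k))
       = exp (- L) * (L ^ k / fact k) - exp (- L) * s^z * (real z ^ k / fact k)" if "k < z" for k
  proof -
    have H: "L ^ k * s ^ (z - k) = real z ^ k * s ^ z"
    proof -
      have "L ^ k * s ^ (z - k) = real z ^ k * (s ^ k * s ^ (z - k))"
        unfolding L_def by (simp add: power_mult_distrib)
      also have "s ^ k * s ^ (z - k) = s ^ z" using that by (simp flip: power_add)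
      finally show ?thesis .
    qed
    have "exp (- L) * L ^ k / fact k * (1 - s ^ (z - k))
       = exp (- L) * (L ^ k / fact k) - exp (- L) * (L ^ k * s ^ (z - k)) / fact k"
      by (simp add: field_simps)
    also have "\<dots> = exp (- L) * (L ^ k / fact k) - exp (- L) * s^z * (real z ^ k / fact k)"
      unfolding H by simp
    finally show ?thesis .
  qed
  have eq: "P_SN q z = (1 - exp (- L) * (\<Sum>k<z. L ^ k / fact k))
      + exp (- L) * s^z * (\<Sum>k<z. real z ^ k / fact k)"
  proof -
    have "P_SN q z = 1 - (\<Sum>k<z. exp (- L) * L ^ k / fact k * (1 - s ^ (z - k)))"
      unfolding P_SN_def Let_def p_def[symmetric] lam qp ..
    also have "(\<Sum>k<z. exp (- L) * L ^ k / fact k * (1 - s ^ (z - k)))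
       = (\<Sum>k<z. exp (- L) * (L ^ k / fact k) - exp (- L) * s^z * (real z ^ k / fact k))"
      by (rule sum.cong[OF refl], rule trm, simp)
    finally show ?thesis by (simp add: sum_subtractf sum_distrib_left)
  qed
  define f where "f = (\<lambda>n. L ^ n / fact n)"
  define g where "g = (\<lambda>n. s ^ z * (real z ^ n / fact n))"
  have fs: "(\<lambda>i. f (i + z)) sums (exp L - (\<Sum>k<z. f k))"
    unfolding f_def by (rule sums_split_initial_segment[OF exp_sums_real])
  have gs0: "g sums (s ^ z * exp (real z))"
    unfolding g_def by (rule sums_mult[OF exp_sums_real])
  have gs: "(\<lambda>i. g (i + z)) sums (s ^ z * exp (real z) - (\<Sum>k<z. g k))"
    by (rule sums_split_initial_segment[OF gs0])
  have fg: "f (i + z) \<le> g (i + z)" for i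
  proof -
    have "L ^ (i + z) = real z ^ (i + z) * s ^ (i + z)" unfolding L_def by (simp add: power_mult_distrib)
    also have "\<dots> \<le> real z ^ (i + z) * s ^ z"
      by (rule mult_left_mono) (use s0 s1 in \<open>simp_all add: power_decreasing\<close>)
    finally show ?thesis unfolding f_def g_def by (simp add: divide_right_mono mult.commute)
  qed
  have "exp L - (\<Sum>k<z. f k) \<le> s ^ z * exp (real z) - (\<Sum>k<z. g k)"
    using sums_le[OF fg fs gs] .
  moreover have "0 \<le> (\<Sum>k<z. g k)" unfolding g_def using s0 by (simp add: sum_nonneg)
  ultimately have F3: "exp L - (\<Sum>k<z. L ^ k / fact k) \<le> s ^ z * exp (real z)"
    unfolding f_def by linarith
  have F1: "(\<Sum>k<z. L ^ k / fact k) \<le> exp L" by (rule expsum_le[OF L0])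
  have F2: "(\<Sum>k<z. real z ^ k / fact k) \<le> exp (real z)" by (rule expsum_le) simp
  have F2': "0 \<le> (\<Sum>k<z. real z ^ k / fact k)" by (simp add: sum_nonneg)
  have e1: "1 - exp (- L) * (\<Sum>k<z. L ^ k / fact k) = exp (- L) * (exp L - (\<Sum>k<z. L ^ k / fact k))"
    by (simp add: algebra_simps exp_minus_inverse)
  define E where "E = exp (- L)"
  have E0: "0 < E" unfolding E_def by simp
  have sz: "0 \<le> s ^ z" using s0 by simp
  have a1: "0 \<le> 1 - exp (- L) * (\<Sum>k<z. L ^ k / fact k)"
    unfolding e1 using F1 by simp
  have a2: "1 - exp (- L) * (\<Sum>k<z. L ^ k / fact k) \<le> E * (s ^ z * exp (real z))"
    unfolding e1 unfolding E_def[symmetric] using mult_left_mono[OF F3 less_imp_le[OF E0]] .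
  have b1: "0 \<le> E * s^z * (\<Sum>k<z. real z ^ k / fact k)" using E0 sz F2' by simp
  have b2: "E * s^z * (\<Sum>k<z. real z ^ k / fact k) \<le> E * (s ^ z * exp (real z))"
    using mult_left_mono[OF F2, of "E * s^z"] E0 sz by (simp add: mult.assoc)
  have fin: "E * (s ^ z * exp (real z)) = (s * exp (1 - s))^z"
  proof -
    have "E * exp (real z) = exp (real z * (1 - s))"
      unfolding E_def L_def by (simp flip: exp_add add: algebra_simps)
    also have "\<dots> = exp (1 - s) ^ z" by (simp add: exp_of_nat_mult)
    finally show ?thesis by (simp add: power_mult_distrib algebra_simps)
  qed
  show ?thesis using eq a1 a2 b1 b2 fin unfolding E_def by linarith
qed


lemma rho_lt1:
  fixes q :: real
  assumes q0: "0 < q" and q1: "q < 1/2"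
  shows "(q / (1-q)) * exp (1 - q / (1-q)) < 4 * (1-q) * q"
proof -
  define p where "p = 1 - q"
  define s where "s = q / p"
  define t where "t = (1 - s) / 2"
  have p0: "0 < p" using q1 p_def by simp
  have s1: "s < 1" and s0: "0 < s" using q0 q1 by (auto simp: s_def p_def field_simps)
  have t0: "0 < t" and t1: "t < 1/2" using s0 s1 t_def by auto
  have omt: "1 - t = 1 / (2 * p)" unfolding t_def s_def p_def using q1 by (simp add: field_simps)
  have h1: "1 - t / 2 \<le> exp (- (t/2))" using exp_ge_add_one_self[of "- (t/2)"] by simp
  have h2: "(1 - t/2)^2 \<le> exp (- (t/2)) ^ 2"
    by (rule power_mono[OF h1]) (use t1 in simp)
  have h3: "exp (- (t/2)) ^ 2 = exp (- t)"
    by (simp add: power2_eq_square flip: exp_add)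
  have h4: "1 - t < (1 - t/2)^2" using t0 by (simp add: power2_eq_square algebra_simps)
  have h5: "1 - t < exp (- t)" using h2 h3 h4 by linarith
  have h6: "exp t * (1 - t) < 1"
  proof -
    have "exp t * (1 - t) < exp t * exp (- t)" by (rule mult_strict_left_mono[OF h5]) simp
    thus ?thesis by (simp flip: exp_add)
  qed
  have h7: "exp t < 2 * p"
  proof -
    have "exp t * (1 / (2*p)) < 1" using h6 omt by simp
    thus ?thesis using p0 by (simp add: field_simps)
  qed
  have h8: "exp (1 - s) = exp t * exp t" unfolding t_def by (simp flip: exp_add)
  have h9: "exp (1 - s) < (2*p) * (2*p)"
    unfolding h8 by (rule mult_strict_mono) (use h7 p0 in auto)
  have "s * exp (1 - s) < s * ((2*p) * (2*p))" by (rule mult_strict_left_mono[OF h9 s0])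
  also have "s * ((2*p) * (2*p)) = 4 * p * q" unfolding s_def using p0 by (simp add: field_simps)
  finally show ?thesis unfolding s_def p_def .
qed

theorem mainTheorem10:
  fixes q :: real
  assumes "0 < q" and "q < 1/2"
  shows "((\<lambda>z. P_SN q z / P_exact q z) \<longlongrightarrow> 0) sequentially"
proof -
  note q0 = assms(1) and q1 = assms(2)
  define p where "p = 1 - q"
  define s where "s = q / (1 - q)"
  define a where "a = s * exp (1 - s)"
  define r where "r = a / (4 * p * q)"
  have p0: "0 < p" using q1 p_def by simp
  have s0: "0 < s" using q0 q1 s_def by simp
  have a0: "0 < a" using s0 a_def by simp
  have r0: "0 < r" using a0 p0 q0 r_def by simp
  have a4: "a < 4 * p * q" using rho_lt1[OF q0 q1] unfolding a_def s_def p_def .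
  have r1: "r < 1" using a4 p0 q0 unfolding r_def by (simp add: field_simps)
  have bound: "P_SN q z / P_exact q z \<le> 16 * p * (real z * r ^ z)"
    and nonneg: "0 \<le> P_SN q z / P_exact q z" if z2: "z \<ge> 2" for z
  proof -
    define D where "D = q^z * (1-q)^(z-1) * (4^(z-1) / (2 * real (z-1)))"
    have D0: "0 < D" unfolding D_def using q0 q1 z2 by simp
    have PD: "D \<le> P_exact q z" unfolding D_def by (rule Pexact_lower) (use q0 q1 z2 in auto)
    have SN: "0 \<le> P_SN q z" "P_SN q z \<le> 2 * a ^ z"
      using PSN_bounds[OF q0 q1, of z] unfolding a_def s_def by auto
    show "0 \<le> P_SN q z / P_exact q z" using SN PD D0 by simp
    have le1: "P_SN q z / P_exact q z \<le> (2 * a ^ z) / D"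
      by (rule frac_le) (use SN PD D0 a0 in auto)
    have H: "D * (8 * p * real (z - 1)) = (4 * p * q) ^ z"
    proof -
      obtain m where m: "z = Suc m" and m1: "m \<ge> 1" using z2 by (cases z) auto
      have "D = q^(Suc m) * p^m * (4^m / (2 * real m))" unfolding D_def p_def m by simp
      thus ?thesis using m1 m by (simp add: field_simps power_mult_distrib)
    qed
    define K where "K = (4 * p * q) ^ z"
    have K0: "0 < K" unfolding K_def using p0 q0 by simp
    have zp: "0 < real (z - 1)" using z2 by simp
    have Deq: "D = K / (8 * p * real (z - 1))" using H p0 zp unfolding K_def by (simp add: field_simps)
    have rz: "r ^ z = a ^ z / K" unfolding r_def K_def by (simp add: power_divide)
    note le1
    also have "(2 * a ^ z) / D = 16 * p * real (z - 1) * r ^ z"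
      unfolding Deq rz using K0 p0 zp by (simp add: field_simps)
    also have "\<dots> \<le> 16 * p * (real z * r ^ z)"
      using p0 r0 by (simp add: mult_right_mono)
    finally show "P_SN q z / P_exact q z \<le> 16 * p * (real z * r ^ z)" .
  qed
  have lim: "(\<lambda>z. 16 * p * (real z * r ^ z)) \<longlonglongrightarrow> 0"
    using tendsto_mult[OF tendsto_const powser_times_n_limit_0[of r]] r0 r1 by simp
  show ?thesis
    by (rule tendsto_sandwich[OF _ _ tendsto_const lim])
       (auto simp: eventually_sequentially intro!: exI[of _ 2] bound nonneg)
qed
end
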